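(* In the zero-sum three-door Monty Hall game described in the context (value $V=2/3$), a mixed strategy $Q$ of Monte is minimax (i.e. $\max_P W(P,Q)=2/3$) if and only if $Q=Q^*_{\lambda_1,\lambda_2,\lambda_3}$ for some $\lambda_1,\lambda_2,\lambda_3\in[0,1]$, where $Q^*_{\lambda_1,\lambda_2,\lambda_3}$ assigns to the pure strategies $(1,2),(1,3),(2,1),(2,3),(3,1),(3,2)$ the probabilities $\lambda_1/3,(1-\lambda_1)/3,\lambda_2/3,(1-\lambda_2)/3,\lambda_3/3,(1-\lambda_3)/3$ respectively; equivalently, iff $\theta$ is uniformly distributed on $\{1,2,3\}$ under $Q$.
   Context: Doors are numbered $1,2,3$. A pure strategy of Monte is a pair $(\theta,d)$ with $\theta\in\{1,2,3\}$ (the door hiding the prize) and $d\in\{1,2,3\}\setminus\{\theta\}$ (six strategies). A pure strategy of Conie is a triple $x\,a\,b$ with $x\in\{1,2,3\}$ and $a,b\in\{\mathrm{h},\mathrm{s}\}$ (twelve strategies). Under the profile $((\theta,d),x\,a\,b)$: Monte offers door $y=\theta$ if $x\neq\theta$ and $y=d$ if $x=\theta$; Conie's action is $a$ if $y$ is the smaller of the two doors in $\{1,2,3\}\setminus\{x\}$ and $b$ otherwise; her final choice is $z=x$ for action $\mathrm{h}$ and $z=y$ for action $\mathrm{s}$; she wins (payoff 1) iff $z=\theta$, else payoff 0; Monte's payoff is the negative. Mixed strategies are probability distributions on pure strategies, played independently; $W(P,Q)$ denotes the probability that Conie wins when Conie plays $P$ and Monte plays $Q$. A strategy $Q$ of Monte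 is minimax if $\max_P W(P,Q)=\min_{Q'}\max_P W(P,Q')$. *)

theory Defs
  imports "HOL-Probability.Probability"
begin

datatype action = Hold | Switch

type_synonym monte_pure = "nat \<times> nat"
type_synonym conie_pure = "nat \<times> action \<times> action"

definition doors :: "nat set" where "doors = {1,2,3}"

definition monte_strats :: "monte_pure set" where
  "monte_strats = {(\<theta>, d). \<theta> \<in> doors \<and> d \<in> doors \<and> d \<noteq> \<theta>}"

definition conie_strats :: "conie_pure set" where
  "conie_strats = {(x, a, b). x \<in> doors}"

definition win :: "conie_pure \<Rightarrow> monte_pure \<Rightarrow> real" where
  "win c m = (case c of (x, a, b) \<Rightarrow> case m of (\<theta>, d) \<Rightarrow>
     (let y = (if x \<noteq> \<theta> then \<theta> else d);
          act = (if y = Min (doors - {x}) then a else b);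
          z = (if act = Hold then x else y)
      in if z = \<theta> then 1 else 0))"

definition monte_mixed :: "monte_pure pmf set" where
  "monte_mixed = {Q. set_pmf Q \<subseteq> monte_strats}"

definition conie_mixed :: "conie_pure pmf set" where
  "conie_mixed = {P. set_pmf P \<subseteq> conie_strats}"

definition W :: "conie_pure pmf \<Rightarrow> monte_pure pmf \<Rightarrow> real" where
  "W P Q = (\<Sum>c\<in>conie_strats. \<Sum>m\<in>monte_strats. pmf P c * pmf Q m * win c m)"

definition is_minimax :: "monte_pure pmf \<Rightarrow> bool" where
  "is_minimax Q \<longleftrightarrow> Q \<in> monte_mixed \<and>
     (SUP P\<in>conie_mixed. W P Q) = (INF Q'\<in>monte_mixed. SUP P\<in>conie_mixed. W P Q')"

definition Qstar :: "real \<Rightarrow> real \<Rightarrow> real \<Rightarrow> monte_pure \<Rightarrow> real" where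
  "Qstar l1 l2 l3 m =
     (if m = (1,2) then l1/3 else if m = (1,3) then (1-l1)/3
      else if m = (2,1) then l2/3 else if m = (2,3) then (1-l2)/3
      else if m = (3,1) then l3/3 else if m = (3,2) then (1-l3)/3 else 0)"

end

theory Submission
  imports Defs
begin
lemma monte_strats_eq: "monte_strats = {(1,2),(1,3),(2,1),(2,3),(3,1),(3,2)}"
  by (auto simp: monte_strats_def doors_def)
lemma monte_sum: "(\<Sum>m\<in>monte_strats. f m) = f(1,2)+f(1,3)+f(2,1)+f(2,3)+f(3,1)+(f(3,2)::real)"
  by (simp add: monte_strats_eq add.assoc)
lemma minD: "Min (doors - {1}) = 2" "Min (doors - {2}) = 1" "Min (doors - {3}) = 1"
  "Min (doors - {Suc 0}) = 2"
  by (simp_all add: doors_def insert_Diff_if)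

definition Wc :: "monte_pure pmf \<Rightarrow> conie_pure \<Rightarrow> real" where
  "Wc Q c = (\<Sum>m\<in>monte_strats. pmf Q m * win c m)"

abbreviation "ch a u v \<equiv> (if a = Hold then u else (v::real))"

lemma Wc1: "Wc Q (1,a,b) = ch a (pmf Q (1,2)) (pmf Q (2,1) + pmf Q (2,3))
   + ch b (pmf Q (1,3)) (pmf Q (3,1) + pmf Q (3,2))"
  unfolding Wc_def monte_sum by (cases a; cases b; simp add: win_def minD Let_def)
lemma Wc2: "Wc Q (2,a,b) = ch a (pmf Q (2,1)) (pmf Q (1,2) + pmf Q (1,3))
   + ch b (pmf Q (2,3)) (pmf Q (3,1) + pmf Q (3,2))"
  unfolding Wc_def monte_sum by (cases a; cases b; simp add: win_def minD Let_def)
lemma Wc3: "Wc Q (3,a,b) = ch a (pmf Q (3,1)) (pmf Q (1,2) + pmf Q (1,3))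
   + ch b (pmf Q (3,2)) (pmf Q (2,1) + pmf Q (2,3))"
  unfolding Wc_def monte_sum by (cases a; cases b; simp add: win_def minD Let_def)

lemma conie_fin: "finite conie_strats"
proof -
  have "conie_strats = doors \<times> UNIV"
    by (auto simp: conie_strats_def)
  moreover have "finite (UNIV :: action set)"
  proof -
    have "(UNIV :: action set) = {Hold, Switch}" using action.exhaust by blast
    then show ?thesis by (metis finite.intros)
  qed
  then have "finite (UNIV::(action\<times>action) set)"
    by (simp flip: UNIV_Times_UNIV)
  then have "finite (doors \<times> (UNIV::(action\<times>action) set))"
    by (intro finite_cartesian_product) (simp_all add: doors_def)
  ultimately show ?thesis by simp
qed

lemma W_eq: "W P Q = (\<Sum>c\<in>conie_strats. pmf P c * Wc Q c)"
  unfolding W_def Wc_def by (simp add: sum_distrib_left mult.assoc)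

lemma W_return: "c \<in> conie_strats \<Longrightarrow> W (return_pmf c) Q = Wc Q c"
  unfolding W_eq using conie_fin by (simp add: pmf_return indicator_def)

lemma monte_fin: "finite monte_strats" by (simp add: monte_strats_eq)

lemma q_sum: assumes "Q \<in> monte_mixed"
  shows "pmf Q (1,2)+pmf Q (1,3)+pmf Q (2,1)+pmf Q (2,3)+pmf Q (3,1)+pmf Q (3,2) = 1"
proof -
  have "sum (pmf Q) monte_strats = 1"
    using assms monte_fin by (simp add: monte_mixed_def sum_pmf_eq_1)
  then show ?thesis by (simp add: monte_sum)
qed

lemma prob_fst: assumes "Q \<in> monte_mixed"
  shows "measure_pmf.prob Q {m. fst m = x} = sum (pmf Q) ({m. fst m = x} \<inter> monte_strats)"
proof -
  have S: "set_pmf Q \<subseteq> monte_strats" using assms by (simp add: monte_mixed_def)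
  have "measure_pmf.prob Q {m. fst m = x} = measure_pmf.prob Q ({m. fst m = x} \<inter> set_pmf Q)"
    by (simp add: measure_Int_set_pmf)
  also have "{m. fst m = x} \<inter> set_pmf Q = ({m. fst m = x} \<inter> monte_strats) \<inter> set_pmf Q"
    using S by blast
  also have "measure_pmf.prob Q \<dots> = measure_pmf.prob Q ({m. fst m = x} \<inter> monte_strats)"
    by (simp add: measure_Int_set_pmf)
  also have "\<dots> = sum (pmf Q) ({m. fst m = x} \<inter> monte_strats)"
    using monte_fin by (simp add: measure_measure_pmf_finite)
  finally show ?thesis .
qed

lemma p1: "Q \<in> monte_mixed \<Longrightarrow> measure_pmf.prob Q {m. fst m = 1} = pmf Q (1,2) + pmf Q (1,3)"
proof -
  assume a: "Q \<in> monte_mixed"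
  have "{m. fst m = (1::nat)} \<inter> monte_strats = {(1,2),(1,3)}" by (auto simp: monte_strats_eq)
  then show ?thesis using prob_fst[OF a] by simp
qed
lemma p2: "Q \<in> monte_mixed \<Longrightarrow> measure_pmf.prob Q {m. fst m = 2} = pmf Q (2,1) + pmf Q (2,3)"
proof -
  assume a: "Q \<in> monte_mixed"
  have "{m. fst m = (2::nat)} \<inter> monte_strats = {(2,1),(2,3)}" by (auto simp: monte_strats_eq)
  then show ?thesis using prob_fst[OF a] by simp
qed
lemma p3: "Q \<in> monte_mixed \<Longrightarrow> measure_pmf.prob Q {m. fst m = 3} = pmf Q (3,1) + pmf Q (3,2)"
proof -
  assume a: "Q \<in> monte_mixed"
  have "{m. fst m = (3::nat)} \<inter> monte_strats = {(3,1),(3,2)}" by (auto simp: monte_strats_eq)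
  then show ?thesis using prob_fst[OF a] by simp
qed
lemma conie_cases: "c \<in> conie_strats \<Longrightarrow> (\<And>a b. P (1,a,b)) \<Longrightarrow> (\<And>a b. P (2,a,b)) \<Longrightarrow> (\<And>a b. P (3,a,b)) \<Longrightarrow> P c"
  by (cases c) (auto simp: conie_strats_def doors_def)

lemma nn: "pmf Q m \<ge> 0" by simp

lemma Wc_le1: assumes "Q \<in> monte_mixed" "c \<in> conie_strats" shows "Wc Q c \<le> 1"
  using assms(2) 
proof (rule conie_cases)
  note q = q_sum[OF assms(1)] nn[of Q "(1,2)"] nn[of Q "(1,3)"] nn[of Q "(2,1)"] nn[of Q "(2,3)"] nn[of Q "(3,1)"] nn[of Q "(3,2)"]
  fix a b
  show "Wc Q (1,a,b) \<le> 1" unfolding Wc1 using q by (cases a; cases b; simp only: action.distinct if_True if_False simp_thms; linarith)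
  show "Wc Q (2,a,b) \<le> 1" unfolding Wc2 using q by (cases a; cases b; simp only: action.distinct if_True if_False simp_thms; linarith)
  show "Wc Q (3,a,b) \<le> 1" unfolding Wc3 using q by (cases a; cases b; simp only: action.distinct if_True if_False simp_thms; linarith)
qed

definition unif :: "monte_pure pmf \<Rightarrow> bool" where
  "unif Q \<longleftrightarrow> pmf Q (1,2) + pmf Q (1,3) = 1/3 \<and> pmf Q (2,1) + pmf Q (2,3) = 1/3 \<and> pmf Q (3,1) + pmf Q (3,2) = 1/3"

lemma Wc_le23: assumes "unif Q" "c \<in> conie_strats" shows "Wc Q c \<le> 2/3"
  using assms(2) 
proof (rule conie_cases)
  note q = assms(1)[unfolded unif_def] nn[of Q "(1,2)"] nn[of Q "(1,3)"] nn[of Q "(2,1)"] nn[of Q "(2,3)"] nn[of Q "(3,1)"] nn[of Q "(3,2)"]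
  fix a b
  show "Wc Q (1,a,b) \<le> 2/3" unfolding Wc1 using q by (cases a; cases b; simp only: action.distinct if_True if_False simp_thms; linarith)
  show "Wc Q (2,a,b) \<le> 2/3" unfolding Wc2 using q by (cases a; cases b; simp only: action.distinct if_True if_False simp_thms; linarith)
  show "Wc Q (3,a,b) \<le> 2/3" unfolding Wc3 using q by (cases a; cases b; simp only: action.distinct if_True if_False simp_thms; linarith)
qed

lemma W_le: assumes "\<forall>c\<in>conie_strats. Wc Q c \<le> B" "P \<in> conie_mixed" shows "W P Q \<le> B"
proof -
  have "W P Q \<le> (\<Sum>c\<in>conie_strats. pmf P c * B)"
    unfolding W_eq using assms(1) by (intro sum_mono mult_left_mono) auto
  also have "\<dots> = B * sum (pmf P) conie_strats" by (simp add: sum_distrib_left mult.commute)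
  also have "sum (pmf P) conie_strats = 1"
    using assms(2) conie_fin by (simp add: conie_mixed_def sum_pmf_eq_1)
  finally show ?thesis by simp
qed

lemma ret_mixed: "c \<in> conie_strats \<Longrightarrow> return_pmf c \<in> conie_mixed"
  by (simp add: conie_mixed_def)

definition F :: "monte_pure pmf \<Rightarrow> real" where
  "F Q = (SUP P\<in>conie_mixed. W P Q)"

lemma F_ge: assumes "Q \<in> monte_mixed" "c \<in> conie_strats" shows "Wc Q c \<le> F Q"
proof -
  have "bdd_above ((\<lambda>P. W P Q) ` conie_mixed)"
    using W_le[of Q 1] Wc_le1[OF assms(1)] by (auto intro!: bdd_aboveI)
  then have "W (return_pmf c) Q \<le> F Q" unfolding F_def
    by (rule cSUP_upper[OF ret_mixed[OF assms(2)]])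
  then show ?thesis using W_return[OF assms(2)] by simp
qed

lemma F_le: assumes "\<forall>c\<in>conie_strats. Wc Q c \<le> B" shows "F Q \<le> B"
proof -
  have "(1, Hold, Hold) \<in> conie_strats" by (simp add: conie_strats_def doors_def)
  then have ne: "conie_mixed \<noteq> {}" using ret_mixed by blast
  show ?thesis unfolding F_def by (rule cSUP_least[OF ne]) (rule W_le[OF assms])
qed

lemma F_unif: "Q \<in> monte_mixed \<Longrightarrow> unif Q \<Longrightarrow> F Q = 2/3"
proof -
  assume a: "Q \<in> monte_mixed" "unif Q"
  have "F Q \<le> 2/3" using Wc_le23[OF a(2)] by (intro F_le) auto
  moreover have "Wc Q (1,Switch,Switch) \<le> F Q"
    using F_ge[OF a(1)] by (simp add: conie_strats_def doors_def)
  then have "2/3 \<le> F Q" using a(2) unfolding Wc1 unif_def by simp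
  ultimately show ?thesis by simp
qed

lemma aux6: "\<not> (a+b = 1/3 \<and> c+d = 1/3 \<and> e+f = 1/3) \<Longrightarrow> a+b+c+d+e+f = (1::real) \<Longrightarrow>
   a+b < 1/3 \<or> c+d < 1/3 \<or> e+f < 1/3" by arith

lemma F_ge23: assumes "Q \<in> monte_mixed" shows "2/3 \<le> F Q" "\<not> unif Q \<Longrightarrow> 2/3 < F Q"
proof -
  have s: "(1::nat,Switch,Switch) \<in> conie_strats" "(2::nat,Switch,Switch) \<in> conie_strats"
     "(3::nat,Switch,Switch) \<in> conie_strats" by (simp_all add: conie_strats_def doors_def)
  have w1: "Wc Q (1,Switch,Switch) \<le> F Q" using F_ge[OF assms s(1)] .
  have w2: "Wc Q (2,Switch,Switch) \<le> F Q" using F_ge[OF assms s(2)] .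
  have w3: "Wc Q (3,Switch,Switch) \<le> F Q" using F_ge[OF assms s(3)] .
  note q = q_sum[OF assms]
  from w1 w2 w3 q show "2/3 \<le> F Q" unfolding Wc1 Wc2 Wc3 by simp
  assume "\<not> unif Q"
  then have "pmf Q (1,2) + pmf Q (1,3) < 1/3 \<or> pmf Q (2,1) + pmf Q (2,3) < 1/3 \<or> pmf Q (3,1) + pmf Q (3,2) < 1/3"
    using q unfolding unif_def by (rule aux6)
  then show "2/3 < F Q" using w1 w2 w3 q unfolding Wc1 Wc2 Wc3
    by (simp only: action.distinct if_False simp_thms) (elim disjE; linarith)
qed

lemma Q0: "pmf_of_set {(1,2),(2,1),(3,1)} \<in> monte_mixed" "unif (pmf_of_set {(1,2),(2,1),(3,1)})"
  by (auto simp: monte_mixed_def monte_strats_eq unif_def)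

lemma INF_val: "(INF Q'\<in>monte_mixed. F Q') = 2/3"
proof (rule antisym)
  have "bdd_below (F ` monte_mixed)" using F_ge23(1) by (auto intro!: bdd_belowI[where m="2/3"])
  then have "(INF Q'\<in>monte_mixed. F Q') \<le> F (pmf_of_set {(1,2),(2,1),(3,1)})"
    by (rule cINF_lower[OF _ Q0(1)])
  then show "(INF Q'\<in>monte_mixed. F Q') \<le> 2/3" using F_unif[OF Q0] by simp
  show "2/3 \<le> (INF Q'\<in>monte_mixed. F Q')"
    using Q0(1) F_ge23(1) by (intro cINF_greatest) auto
qed

lemma minimax_unif: "Q \<in> monte_mixed \<Longrightarrow> is_minimax Q \<longleftrightarrow> unif Q"
  using INF_val F_unif F_ge23 unfolding is_minimax_def F_def[symmetric] by force

lemma unif_prob: "Q \<in> monte_mixed \<Longrightarrow> unif Q \<longleftrightarrow> (\<forall>\<theta>\<in>doors. measure_pmf.prob Q {m. fst m = \<theta>} = 1/3)"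
  using p1 p2 p3 by (simp add: doors_def unif_def)

lemma unif_Qstar: assumes "Q \<in> monte_mixed"
  shows "unif Q \<longleftrightarrow> (\<exists>l1\<in>{0..1}. \<exists>l2\<in>{0..1}. \<exists>l3\<in>{0..1}. pmf Q = Qstar l1 l2 l3)"
proof
  assume u: "unif Q"
  note q = u[unfolded unif_def] nn[of Q "(1,2)"] nn[of Q "(1,3)"] nn[of Q "(2,1)"] nn[of Q "(2,3)"] nn[of Q "(3,1)"] nn[of Q "(3,2)"]
  have "pmf Q = Qstar (3 * pmf Q (1,2)) (3 * pmf Q (2,1)) (3 * pmf Q (3,1))"
  proof
    fix m
    show "pmf Q m = Qstar (3 * pmf Q (1,2)) (3 * pmf Q (2,1)) (3 * pmf Q (3,1)) m"
    proof (cases "m \<in> monte_strats")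
      case True
      then show ?thesis using q unfolding monte_strats_eq Qstar_def by auto
    next
      case False
      then have "m \<notin> set_pmf Q" using assms by (auto simp: monte_mixed_def)
      then have "pmf Q m = 0" by (simp add: pmf_eq_0_set_pmf)
      moreover have "Qstar a b c m = 0" for a b c using False unfolding monte_strats_eq Qstar_def by auto
      ultimately show ?thesis by simp
    qed
  qed
  moreover have "3 * pmf Q (1,2) \<in> {0..1}" "3 * pmf Q (2,1) \<in> {0..1}" "3 * pmf Q (3,1) \<in> {0..1}"
    unfolding atLeastAtMost_iff using q by linarith+
  ultimately show "\<exists>l1\<in>{0..1}. \<exists>l2\<in>{0..1}. \<exists>l3\<in>{0..1}. pmf Q = Qstar l1 l2 l3" by blast
next
  assume "\<exists>l1\<in>{0..1}. \<exists>l2\<in>{0..1}. \<exists>l3\<in>{0..1}. pmf Q = Qstar l1 l2 l3"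
  then obtain l1 l2 l3 where e: "pmf Q = Qstar l1 l2 l3" by blast
  show "unif Q" unfolding unif_def e by (simp add: Qstar_def field_simps)
qed

theorem mainTheorem7:
  assumes "Q \<in> monte_mixed"
  shows "(is_minimax Q \<longleftrightarrow>
           (\<exists>l1\<in>{0..1}. \<exists>l2\<in>{0..1}. \<exists>l3\<in>{0..1}. pmf Q = Qstar l1 l2 l3))
       \<and> (is_minimax Q \<longleftrightarrow>
           (\<forall>\<theta>\<in>doors. measure_pmf.prob Q {m. fst m = \<theta>} = 1/3))"
  using minimax_unif[OF assms] unif_prob[OF assms] unif_Qstar[OF assms] by simp

end
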